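(* Consider the single-server control problem of minimizing $\limsup_{T\to\infty}\frac1T\sum_{t=0}^{T-1}\mathbb{E}[c(X_t,\nu_t)]$ with $c(x,\nu)=Cx+(1-\nu)\lambda$. There exists an optimal stable stationary policy $v^*:\mathcal N\to\{0,1\}$, and $W(x)=e^{ax}$ (with $a>0$ satisfying $p(e^a-1)<\frac{q}{2}(1-e^{-a})$) serves as a Lyapunov function for the corresponding optimally controlled Markov chain $\{X^*_t\}$, i.e. $\mathbb{E}[W(X^*_{t+1})-W(X^*_t)\mid X^*_t]\le -bW(X^*_t)$ for $X^*_t\neq 0$, for some $b>0$.
   Context: Single-server (decoupled) problem: Bernoulli($p$) arrivals $\xi_t$, $p\in(0,1)$; queue length $X_t\in\mathcal N=\{0,1,2,\dots\}$ with $X_{t+1}=X_t-D_{t+1}+\nu_t\xi_{t+1}$, $\nu_t\in\{0,1\}$ an admissible control (1 = active, arrivals admitted; 0 = passive), where given $X_t=x\ge1$, $D_{t+1}\sim\mathrm{Binomial}(x,q/x)$ and there are no departures when $x=0$. Parameters: holding cost $C>0$, capacity $q$ with $1>q>2p$, Lagrange multiplier (subsidy/tax for passivity) $\lambda\in\mathbb R$. Cost per stage $c(x,\nu)=Cx+(1-\nu)\lambda$. *)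

theory Defs
  imports "HOL-Probability.Probability"
begin

text \<open>State x :: nat, action a :: bool (True = active, 1; False = passive, 0).\<close>

definition departures :: "real \<Rightarrow> nat \<Rightarrow> nat pmf" where
  "departures q x = (if x = 0 then return_pmf 0 else binomial_pmf x (q / real x))"

definition queue_trans :: "real \<Rightarrow> real \<Rightarrow> nat \<Rightarrow> bool \<Rightarrow> nat pmf" where
  "queue_trans p q x a =
     bind_pmf (departures q x) (\<lambda>d. bind_pmf (bernoulli_pmf p) (\<lambda>e.
       return_pmf (x - d + (if a \<and> e then 1 else 0))))"

definition cost :: "real \<Rightarrow> real \<Rightarrow> nat \<Rightarrow> bool \<Rightarrow> real" where
  "cost C lam x a = C * real x + (if a then 0 else lam)"

text \<open>Admissible (general, history-dependent, possibly randomized) policies: the action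
  distribution at time t depends on the past state-action history and the current state.\<close>
type_synonym policy = "(nat \<times> bool) list \<Rightarrow> nat \<Rightarrow> bool pmf"

definition stationary :: "(nat \<Rightarrow> bool) \<Rightarrow> policy" where
  "stationary v = (\<lambda>h x. return_pmf (v x))"

fun path_dist :: "real \<Rightarrow> real \<Rightarrow> policy \<Rightarrow> nat \<Rightarrow> nat \<Rightarrow> ((nat \<times> bool) list \<times> nat) pmf" where
  "path_dist p q \<pi> x0 0 = return_pmf ([], x0)"
| "path_dist p q \<pi> x0 (Suc t) =
     bind_pmf (path_dist p q \<pi> x0 t) (\<lambda>(h, x).
       bind_pmf (\<pi> h x) (\<lambda>a. map_pmf (\<lambda>y. (h @ [(x, a)], y)) (queue_trans p q x a)))"

definition state_action :: "real \<Rightarrow> real \<Rightarrow> policy \<Rightarrow> nat \<Rightarrow> nat \<Rightarrow> (nat \<times> bool) pmf" where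
  "state_action p q \<pi> x0 t =
     bind_pmf (path_dist p q \<pi> x0 t) (\<lambda>(h, x). map_pmf (\<lambda>a. (x, a)) (\<pi> h x))"

text \<open>E[c(X_t, nu_t)] (all distributions here have finite support).\<close>
definition exp_cost :: "real \<Rightarrow> real \<Rightarrow> real \<Rightarrow> real \<Rightarrow> policy \<Rightarrow> nat \<Rightarrow> nat \<Rightarrow> real" where
  "exp_cost p q C lam \<pi> x0 t =
     measure_pmf.expectation (state_action p q \<pi> x0 t) (\<lambda>(x, a). cost C lam x a)"

definition avg_cost :: "real \<Rightarrow> real \<Rightarrow> real \<Rightarrow> real \<Rightarrow> policy \<Rightarrow> nat \<Rightarrow> ereal" where
  "avg_cost p q C lam \<pi> x0 =
     limsup (\<lambda>T. ereal ((\<Sum>t<T. exp_cost p q C lam \<pi> x0 t) / real T))"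

definition stable_policy :: "real \<Rightarrow> real \<Rightarrow> (nat \<Rightarrow> bool) \<Rightarrow> bool" where
  "stable_policy p q v \<longleftrightarrow> (\<forall>x0.
     limsup (\<lambda>T. ereal ((\<Sum>t<T. measure_pmf.expectation (path_dist p q (stationary v) x0 t)
                                  (\<lambda>(h, x). real x)) / real T)) < \<infinity>)"

end

theory Submission
  imports Defs "HOL-Library.Diagonal_Subsequence"
begin

lemma exp_bind:
  fixes h :: "'b \<Rightarrow> real"
  assumes "finite (set_pmf M)" "\<And>x. x \<in> set_pmf M \<Longrightarrow> finite (set_pmf (N x))"
  shows "measure_pmf.expectation (bind_pmf M N) h = measure_pmf.expectation M (\<lambda>x. measure_pmf.expectation (N x) h)"
  apply (subst pmf_expectation_bind[OF assms(1) assms(2) subset_refl], simp)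
  apply (subst integral_measure_pmf[OF assms(1)])
  by auto

lemma exp_bool:
  fixes f :: "bool \<Rightarrow> real"
  shows "measure_pmf.expectation M f = pmf M True * f True + pmf M False * f False"
  by (subst integral_measure_pmf_real[of UNIV]) (auto simp: UNIV_bool)

lemma diag_conv:
  fixes F :: "nat \<Rightarrow> nat \<Rightarrow> real"
  assumes bnd: "\<And>n. \<exists>B. \<forall>k. \<bar>F k n\<bar> \<le> B"
  shows "\<exists>r. strict_mono r \<and> (\<forall>n. convergent (\<lambda>k. F (r k) n))"
proof -
  interpret S: subseqs "\<lambda>n s. convergent (\<lambda>k. F (s k) n)"
  proof
    fix n and s :: "nat \<Rightarrow> nat" assume "strict_mono s"
    obtain f where f: "strict_mono f" "monoseq (\<lambda>k. F (s (f k)) n)"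
      using seq_monosub[of "\<lambda>k. F (s k) n"] by blast
    obtain B where B: "\<forall>k. \<bar>F k n\<bar> \<le> B" using bnd by blast
    have "Bseq (\<lambda>k. F (s (f k)) n)" using B by (intro BseqI') auto
    hence "convergent (\<lambda>k. F (s (f k)) n)" using f(2) by (rule Bseq_monoseq_convergent)
    thus "\<exists>r'. strict_mono r' \<and> convergent (\<lambda>k. F ((s \<circ> r') k) n)" using f(1) by auto
  qed
  have "convergent (\<lambda>k. F (S.diagseq k) n)" for n
  proof -
    have "convergent (\<lambda>k. F ((S.diagseq \<circ> (+) (Suc n)) k) n)"
    proof (rule S.diagseq_holds)
      fix r s n assume r: "strict_mono (r :: nat \<Rightarrow> nat)" and c: "convergent (\<lambda>k. F (s k) n)"
      then obtain L where "(\<lambda>k. F (s k) n) \<longlonglongrightarrow> L" by (auto simp: convergent_def)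
      from LIMSEQ_subseq_LIMSEQ[OF this r] show "convergent (\<lambda>k. F ((s \<circ> r) k) n)"
        by (auto simp: convergent_def o_def)
    qed
    hence "convergent (\<lambda>k. F (S.diagseq (k + Suc n)) n)" by (simp add: o_def add.commute)
    thus ?thesis by (subst (asm) convergent_ignore_initial_segment[of "\<lambda>k. F (S.diagseq k) n"])
  qed
  thus ?thesis using S.subseq_diagseq by blast
qed

locale qs =
  fixes p q C lam :: real
  assumes p0: "0 < p" and p1: "p < 1" and pq: "2 * p < q" and q1: "q < 1" and C0: "0 < C"
begin

lemma q0: "0 < q" using p0 pq by linarith

lemma dep_set: "set_pmf (departures q x) \<subseteq> {..x}"
proof (cases "x = 0")
  case True thus ?thesis by (simp add: departures_def)
next
  case False
  hence "0 < q / real x" "q / real x < 1" using q0 q1 by (auto simp: field_simps)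
  thus ?thesis using False by (simp add: departures_def)
qed

lemma dep_fin: "finite (set_pmf (departures q x))"
  using dep_set finite_subset by blast

lemma qt_set: "set_pmf (queue_trans p q x a) \<subseteq> {..Suc x}"
  using dep_set[of x] unfolding queue_trans_def by (auto simp: set_bind_pmf)

lemma qt_fin: "finite (set_pmf (queue_trans p q x a))"
  using qt_set finite_subset by blast

lemma qt_0F: "queue_trans p q 0 False = return_pmf 0"
  by (simp add: queue_trans_def departures_def bind_return_pmf bind_pmf_const)

definition ET :: "nat \<Rightarrow> bool \<Rightarrow> (nat \<Rightarrow> real) \<Rightarrow> real" where
  "ET x a f = measure_pmf.expectation (queue_trans p q x a) f"

lemma ET_sum: "ET x a f = (\<Sum>y\<in>{..Suc x}. f y * pmf (queue_trans p q x a) y)"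
  unfolding ET_def by (rule integral_measure_pmf_real) (use qt_set in auto)

lemma ET_int: "integrable (measure_pmf (queue_trans p q x a)) (f :: nat \<Rightarrow> real)"
  by (rule integrable_measure_pmf_finite[OF qt_fin])

lemma ET_mono: "(\<And>y. y \<in> set_pmf (queue_trans p q x a) \<Longrightarrow> f y \<le> g y) \<Longrightarrow> ET x a f \<le> ET x a g"
  unfolding ET_def by (rule integral_mono_AE) (auto intro!: ET_int AE_pmfI)

lemma ET_add: "ET x a (\<lambda>y. f y + g y) = ET x a f + ET x a g"
  unfolding ET_def by (rule Bochner_Integration.integral_add) (auto intro!: ET_int)

lemma ET_diff: "ET x a (\<lambda>y. f y - g y) = ET x a f - ET x a g"
  unfolding ET_def by (rule Bochner_Integration.integral_diff) (auto intro!: ET_int)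

lemma ET_cmult: "ET x a (\<lambda>y. c * f y) = c * ET x a f"
  unfolding ET_def by simp

lemma ET_const: "ET x a (\<lambda>y. c) = c"
  unfolding ET_def by simp

lemma bern_fin: "finite (set_pmf (bernoulli_pmf r))"
  by (rule finite_subset[of _ UNIV]) auto

lemma ET_exp:
  assumes x: "1 \<le> x"
  shows "ET x a (\<lambda>y. exp (\<alpha> * real y)) =
     exp (\<alpha> * real x) * (1 - q / real x * (1 - exp (- \<alpha>))) ^ x * (if a then 1 - p + p * exp \<alpha> else 1)"
proof -
  define r where "r = q / real x"
  have r0: "0 < r" "r < 1" using q0 q1 x by (auto simp: r_def field_simps)
  define K where "K = (if a then 1 - p + p * exp \<alpha> else 1)"
  have dx: "departures q x = binomial_pmf x r" using x by (simp add: departures_def r_def)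
  have "ET x a (\<lambda>y. exp (\<alpha> * real y)) = measure_pmf.expectation (departures q x)
      (\<lambda>d. measure_pmf.expectation (bernoulli_pmf p) (\<lambda>e. measure_pmf.expectation
         (return_pmf (x - d + (if a \<and> e then 1 else 0))) (\<lambda>y. exp (\<alpha> * real y))))"
    unfolding ET_def queue_trans_def
    by (subst exp_bind, rule dep_fin, simp add: set_bind_pmf bern_fin)
       (subst exp_bind, rule bern_fin, simp, simp)
  also have "\<dots> = measure_pmf.expectation (departures q x)
      (\<lambda>d. p * exp (\<alpha> * real (x - d + (if a then 1 else 0))) + (1 - p) * exp (\<alpha> * real (x - d)))"
    using p0 p1 by (simp add: exp_bool)
  also have "\<dots> = (\<Sum>d\<le>x. (p * exp (\<alpha> * real (x - d + (if a then 1 else 0))) + (1 - p) * exp (\<alpha> * real (x - d))) * pmf (departures q x) d)"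
    by (rule integral_measure_pmf_real) (use dep_set in auto)
  also have "\<dots> = (\<Sum>d\<le>x. exp (\<alpha> * real x) * K * (of_nat (x choose d) * (r * exp (- \<alpha>)) ^ d * (1 - r) ^ (x - d)))"
  proof (rule sum.cong[OF refl])
    fix d assume "d \<in> {..x}"
    hence dle: "d \<le> x" by simp
    have e1: "exp (\<alpha> * real (x - d)) = exp (\<alpha> * real x) * exp (- \<alpha>) ^ d"
      using dle by (simp add: of_nat_diff algebra_simps exp_diff flip: exp_of_nat_mult exp_add)
    have e2: "exp (\<alpha> * real (x - d + 1)) = exp (\<alpha> * real x) * exp (- \<alpha>) ^ d * exp \<alpha>"
      using dle by (simp add: of_nat_diff algebra_simps exp_diff flip: exp_of_nat_mult exp_add)
    show "(p * exp (\<alpha> * real (x - d + (if a then 1 else 0))) + (1 - p) * exp (\<alpha> * real (x - d))) * pmf (departures q x) d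
        = exp (\<alpha> * real x) * K * (of_nat (x choose d) * (r * exp (- \<alpha>)) ^ d * (1 - r) ^ (x - d))"
      unfolding dx pmf_binomial[OF less_imp_le[OF r0(1)] less_imp_le[OF r0(2)]] K_def
      by (cases a) (simp_all add: e1 e2 exp_add power_mult_distrib algebra_simps)
  qed
  also have "\<dots> = exp (\<alpha> * real x) * K * (r * exp (- \<alpha>) + (1 - r)) ^ x"
    by (simp add: binomial_ring sum_distrib_left)
  also have "r * exp (- \<alpha>) + (1 - r) = 1 - q / real x * (1 - exp (- \<alpha>))"
    by (simp add: r_def algebra_simps)
  finally show ?thesis by (simp add: K_def)
qed

lemma drift:
  assumes al: "0 < \<alpha>" and x: "1 \<le> x"
  shows "ET x a (\<lambda>y. exp (\<alpha> * real y)) \<le> exp (p * (exp \<alpha> - 1) - q * (1 - exp (- \<alpha>))) * exp (\<alpha> * real x)"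
proof -
  define t where "t = q / real x * (1 - exp (- \<alpha>))"
  have e1: "exp (- \<alpha>) < 1" using al by simp
  have t0: "0 \<le> t" unfolding t_def using q0 e1 by (intro mult_nonneg_nonneg) auto
  have t1: "t \<le> 1" unfolding t_def using q0 q1 x e1 al
    by (smt (verit, best) divide_le_eq_1 exp_gt_zero mult_le_one of_nat_1 of_nat_le_iff)
  have "(1 - t) ^ x \<le> exp (- t) ^ x"
    by (rule power_mono) (use t1 exp_ge_add_one_self[of "-t"] in auto)
  also have "\<dots> = exp (- (q * (1 - exp (- \<alpha>))))"
    using x by (simp add: t_def flip: exp_of_nat_mult)
  finally have A: "(1 - t) ^ x \<le> exp (- (q * (1 - exp (- \<alpha>))))" .
  have B: "(if a then 1 - p + p * exp \<alpha> else 1) \<le> exp (p * (exp \<alpha> - 1))"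
  proof -
    have "0 \<le> p * (exp \<alpha> - 1)" using p0 al by simp
    thus ?thesis using exp_ge_add_one_self[of "p * (exp \<alpha> - 1)"] by (auto simp: algebra_simps)
  qed
  have Bp: "0 \<le> (if a then 1 - p + p * exp \<alpha> else 1)" using p0 p1 by (auto intro: add_nonneg_nonneg)
  have "ET x a (\<lambda>y. exp (\<alpha> * real y)) = exp (\<alpha> * real x) * (1 - t) ^ x * (if a then 1 - p + p * exp \<alpha> else 1)"
    using ET_exp[OF x] by (simp add: t_def)
  also have "\<dots> \<le> exp (\<alpha> * real x) * exp (- (q * (1 - exp (- \<alpha>)))) * exp (p * (exp \<alpha> - 1))"
    by (intro mult_mono mult_left_mono A B Bp) (use t1 in auto)
  also have "\<dots> = exp (p * (exp \<alpha> - 1) - q * (1 - exp (- \<alpha>))) * exp (\<alpha> * real x)"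
    unfolding exp_add[symmetric] by (simp add: algebra_simps)
  finally show ?thesis .
qed

lemma drift0:
  assumes al: "0 < \<alpha>"
  shows "ET 0 a (\<lambda>y. exp (\<alpha> * real y)) \<le> exp \<alpha>"
proof -
  have "ET 0 a (\<lambda>y. exp (\<alpha> * real y)) \<le> ET 0 a (\<lambda>y. exp \<alpha>)"
  proof (rule ET_mono)
    fix y assume "y \<in> set_pmf (queue_trans p q 0 a)"
    hence "y \<le> 1" using qt_set[of 0 a] by auto
    thus "exp (\<alpha> * real y) \<le> exp \<alpha>" using al
      by (cases y) auto
  qed
  thus ?thesis by (simp add: ET_const)
qed

definition a0 :: real where "a0 = ln 2"
definition W :: "nat \<Rightarrow> real" where "W y = exp (a0 * real y)"
definition \<rho> :: real where "\<rho> = exp (p - q / 2)"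

lemma a0_pos: "0 < a0" by (simp add: a0_def)
lemma exp_a0: "exp a0 = 2" by (simp add: a0_def)
lemma exp_ma0: "exp (- a0) = 1/2" by (simp add: a0_def exp_minus)

lemma rho: "0 < \<rho>" "\<rho> < 1" using pq by (auto simp: \<rho>_def)

lemma W_ge1: "1 \<le> W y" using a0_pos by (simp add: W_def)
lemma W0: "W 0 = 1" by (simp add: W_def)
lemma W_lin: "real y \<le> W y / a0"
proof -
  have "a0 * real y \<le> exp (a0 * real y)" using exp_ge_add_one_self[of "a0 * real y"] by linarith
  thus ?thesis using a0_pos by (simp add: W_def field_simps)
qed

lemma Wdrift1: "1 \<le> x \<Longrightarrow> ET x a W \<le> \<rho> * W x"
  using drift[OF a0_pos, of x a] by (simp add: W_def[abs_def] exp_a0 exp_ma0 \<rho>_def W_def)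

lemma Wdrift0: "ET 0 a W \<le> 2"
  using drift0[OF a0_pos, of a] by (simp add: W_def[abs_def] exp_a0)

lemma Wdrift: "ET x a W \<le> \<rho> * W x + 2"
proof (cases "x = 0")
  case True thus ?thesis using Wdrift0[of a] rho W_ge1[of x] by (simp add: W0)
next
  case False thus ?thesis using Wdrift1[of x a] by simp
qed

definition m :: real where "m = max (- lam) 0"
definition lp :: real where "lp = lam + m"
definition cp :: "nat \<Rightarrow> bool \<Rightarrow> real" where "cp x a = cost C lam x a + m"

lemma lp0: "0 \<le> lp" by (simp add: lp_def m_def)
lemma m0: "0 \<le> m" by (simp add: m_def)
lemma cp0: "0 \<le> cp x a"
proof -
  have "0 \<le> C * real x" using C0 by simp
  thus ?thesis by (auto simp: cp_def cost_def m_def)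
qed
lemma cpF: "cp x False = C * real x + lp" by (simp add: cp_def cost_def lp_def)
lemma cpT: "cp x True = C * real x + m" by (simp add: cp_def cost_def)

definition Bell :: "real \<Rightarrow> (nat \<Rightarrow> real) \<Rightarrow> nat \<Rightarrow> real" where
  "Bell \<beta> f x = min (cp x True + \<beta> * ET x True f) (cp x False + \<beta> * ET x False f)"

definition Vd :: "real \<Rightarrow> nat \<Rightarrow> nat \<Rightarrow> real" where
  "Vd \<beta> n = (Bell \<beta> ^^ n) (\<lambda>x. 0)"

lemma Vd_0: "Vd \<beta> 0 = (\<lambda>x. 0)" by (simp add: Vd_def)
lemma Vd_Suc: "Vd \<beta> (Suc n) = Bell \<beta> (Vd \<beta> n)" by (simp add: Vd_def)

definition bb :: real where "bb = 1 - \<rho>"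
definition K :: real where "K = lp / bb"
definition M :: real where "M = (C / a0 + lp + K * 2) / bb"

lemma bb0: "0 < bb" using rho by (simp add: bb_def)
lemma K0: "0 \<le> K" using bb0 lp0 by (simp add: K_def)
lemma M0: "0 \<le> M" using bb0 lp0 K0 C0 a0_pos by (simp add: M_def)

lemma ET_0F: "ET 0 False f = f 0" by (simp add: ET_def qt_0F)

lemma Bell_mono: "0 \<le> \<beta> \<Longrightarrow> (\<And>y. f y \<le> g y) \<Longrightarrow> Bell \<beta> f x \<le> Bell \<beta> g x"
  unfolding Bell_def
  by (intro min.mono add_left_mono mult_left_mono ET_mono) auto

lemma Bell_nonneg: "0 \<le> \<beta> \<Longrightarrow> (\<And>y. 0 \<le> f y) \<Longrightarrow> 0 \<le> Bell \<beta> f x"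
proof -
  assume b: "0 \<le> \<beta>" and f: "\<And>y. 0 \<le> f y"
  have "\<And>a. 0 \<le> ET x a f" using ET_mono[of x _ "\<lambda>_. 0" f] f by (simp add: ET_const)
  thus ?thesis unfolding Bell_def using b cp0 by (simp add: add_nonneg_nonneg)
qed

lemma Vd_nonneg: "0 \<le> \<beta> \<Longrightarrow> 0 \<le> Vd \<beta> n x"
  by (induction n arbitrary: x) (auto simp: Vd_0 Vd_Suc intro!: Bell_nonneg)

lemma Vd_inc: "0 \<le> \<beta> \<Longrightarrow> Vd \<beta> n x \<le> Vd \<beta> (Suc n) x"
proof (induction n arbitrary: x)
  case 0 thus ?case using Vd_nonneg[of \<beta> 1 x] by (simp add: Vd_0)
next
  case (Suc n) thus ?case unfolding Vd_Suc[of \<beta> "Suc n"] Vd_Suc[of \<beta> n] by (intro Bell_mono) auto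
qed

lemma Vd_Suc0: "0 \<le> \<beta> \<Longrightarrow> Vd \<beta> (Suc n) 0 \<le> lp + \<beta> * Vd \<beta> n 0"
  unfolding Vd_Suc Bell_def by (simp add: ET_0F cpF)

lemma Vd0_le: "0 \<le> \<beta> \<Longrightarrow> \<beta> < 1 \<Longrightarrow> Vd \<beta> n 0 \<le> lp / (1 - \<beta>)"
proof (induction n)
  case 0 thus ?case using lp0 by (simp add: Vd_0)
next
  case (Suc n)
  have "Vd \<beta> (Suc n) 0 \<le> lp + \<beta> * Vd \<beta> n 0" using Vd_Suc0 Suc by simp
  also have "\<dots> \<le> lp + \<beta> * (lp / (1 - \<beta>))" using Suc by (intro add_left_mono mult_left_mono) auto
  also have "\<dots> = lp / (1 - \<beta>)" using Suc by (simp add: field_simps)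
  finally show ?case .
qed

lemma Vd_lower: "0 \<le> \<beta> \<Longrightarrow> \<beta> \<le> 1 \<Longrightarrow> Vd \<beta> n 0 - K * W x \<le> Vd \<beta> n x"
proof (induction n arbitrary: x)
  case 0 thus ?case using K0 W_ge1[of x] by (simp add: Vd_0)
next
  case (Suc n)
  show ?case
  proof (cases "x = 0")
    case True thus ?thesis using K0 by (simp add: W0)
  next
    case False
    hence x1: "1 \<le> x" by simp
    have each: "\<beta> * Vd \<beta> n 0 - K * \<rho> * W x \<le> cp x a + \<beta> * ET x a (Vd \<beta> n)" for a
    proof -
      have "ET x a (\<lambda>y. Vd \<beta> n 0 - K * W y) \<le> ET x a (Vd \<beta> n)"
        by (rule ET_mono) (use Suc in auto)
      hence "Vd \<beta> n 0 - K * ET x a W \<le> ET x a (Vd \<beta> n)"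
        by (simp add: ET_diff ET_const ET_cmult)
      moreover have "K * ET x a W \<le> K * (\<rho> * W x)" using Wdrift1[OF x1] K0 by (intro mult_left_mono) auto
      ultimately have "Vd \<beta> n 0 - K * \<rho> * W x \<le> ET x a (Vd \<beta> n)" by simp
      hence "\<beta> * (Vd \<beta> n 0 - K * \<rho> * W x) \<le> \<beta> * ET x a (Vd \<beta> n)" using Suc by (intro mult_left_mono) auto
      moreover have "\<beta> * (K * \<rho> * W x) \<le> K * \<rho> * W x"
        using Suc K0 rho W_ge1[of x] by (intro mult_left_le_one_le) auto
      ultimately show ?thesis using cp0[of x a] by (simp add: algebra_simps)
    qed
    have "\<beta> * Vd \<beta> n 0 - K * \<rho> * W x \<le> Vd \<beta> (Suc n) x"
      unfolding Vd_Suc Bell_def using each[of True] each[of False] by simp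
    moreover have "Vd \<beta> (Suc n) 0 \<le> lp + \<beta> * Vd \<beta> n 0" using Vd_Suc0 Suc by simp
    moreover have "lp \<le> K * bb * W x"
    proof -
      have "K * bb = lp" using bb0 by (simp add: K_def)
      thus ?thesis using lp0 W_ge1[of x] by (simp add: mult_le_cancel_left1)
    qed
    ultimately show ?thesis by (simp add: bb_def algebra_simps)
  qed
qed


lemma Vd_Suc0_lower: "0 \<le> \<beta> \<Longrightarrow> \<beta> \<le> 1 \<Longrightarrow> \<beta> * Vd \<beta> n 0 - 2 * K \<le> Vd \<beta> (Suc n) 0"
proof -
  assume b: "0 \<le> \<beta>" "\<beta> \<le> 1"
  have "ET 0 True (\<lambda>y. Vd \<beta> n 0 - K * W y) \<le> ET 0 True (Vd \<beta> n)"
    by (rule ET_mono) (use Vd_lower b in auto)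
  hence "Vd \<beta> n 0 - K * ET 0 True W \<le> ET 0 True (Vd \<beta> n)"
    by (simp add: ET_diff ET_const ET_cmult)
  moreover have "K * ET 0 True W \<le> K * 2" using Wdrift0 K0 by (intro mult_left_mono) auto
  ultimately have "Vd \<beta> n 0 - 2 * K \<le> ET 0 True (Vd \<beta> n)" by simp
  hence "\<beta> * (Vd \<beta> n 0 - 2 * K) \<le> \<beta> * ET 0 True (Vd \<beta> n)" using b by (intro mult_left_mono) auto
  moreover have "\<beta> * (2 * K) \<le> 2 * K" using b K0 by (intro mult_left_le_one_le) auto
  ultimately have T: "\<beta> * Vd \<beta> n 0 - 2 * K \<le> cp 0 True + \<beta> * ET 0 True (Vd \<beta> n)"
    using cp0[of 0 True] by (simp add: algebra_simps)
  have F: "\<beta> * Vd \<beta> n 0 - 2 * K \<le> cp 0 False + \<beta> * ET 0 False (Vd \<beta> n)"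
    using K0 lp0 by (simp add: ET_0F cpF)
  show ?thesis unfolding Vd_Suc Bell_def using T F by simp
qed

lemma Vd_upper: "0 \<le> \<beta> \<Longrightarrow> \<beta> \<le> 1 \<Longrightarrow> Vd \<beta> n x \<le> Vd \<beta> n 0 + M * W x"
proof (induction n arbitrary: x)
  case 0 thus ?case using M0 W_ge1[of x] by (simp add: Vd_0)
next
  case (Suc n)
  show ?case
  proof (cases "x = 0")
    case True thus ?thesis using M0 by (simp add: W0)
  next
    case False
    hence x1: "1 \<le> x" by simp
    have "ET x False (Vd \<beta> n) \<le> ET x False (\<lambda>y. Vd \<beta> n 0 + M * W y)"
      by (rule ET_mono) (use Suc in auto)
    hence "ET x False (Vd \<beta> n) \<le> Vd \<beta> n 0 + M * ET x False W"
      by (simp add: ET_add ET_const ET_cmult)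
    moreover have "M * ET x False W \<le> M * (\<rho> * W x)" using Wdrift1[OF x1] M0 by (intro mult_left_mono) auto
    ultimately have "ET x False (Vd \<beta> n) \<le> Vd \<beta> n 0 + M * \<rho> * W x" by simp
    hence "\<beta> * ET x False (Vd \<beta> n) \<le> \<beta> * (Vd \<beta> n 0 + M * \<rho> * W x)" using Suc by (intro mult_left_mono) auto
    moreover have "\<beta> * (M * \<rho> * W x) \<le> M * \<rho> * W x"
      using Suc M0 rho W_ge1[of x] by (intro mult_left_le_one_le) auto
    ultimately have "\<beta> * ET x False (Vd \<beta> n) \<le> \<beta> * Vd \<beta> n 0 + M * \<rho> * W x" by (simp add: algebra_simps)
    hence up: "Vd \<beta> (Suc n) x \<le> C * real x + lp + \<beta> * Vd \<beta> n 0 + M * \<rho> * W x"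
      unfolding Vd_Suc Bell_def cpF by linarith
    have lo: "\<beta> * Vd \<beta> n 0 - 2 * K \<le> Vd \<beta> (Suc n) 0" using Vd_Suc0_lower Suc by simp
    have key: "C * real x + lp + 2 * K \<le> M * bb * W x"
    proof -
      have Mb: "M * bb = C / a0 + lp + 2 * K" using bb0 by (simp add: M_def)
      have "C * real x \<le> C * (W x / a0)" using W_lin[of x] C0 by (intro mult_left_mono) auto
      moreover have "lp + 2 * K \<le> (lp + 2 * K) * W x" using lp0 K0 W_ge1[of x]
        by (simp add: mult_le_cancel_left1)
      ultimately show ?thesis unfolding Mb by (simp add: algebra_simps)
    qed
    show ?thesis using up lo key by (simp add: bb_def algebra_simps)
  qed
qed

lemma Vd_bounded: "0 \<le> \<beta> \<Longrightarrow> \<beta> < 1 \<Longrightarrow> Vd \<beta> n x \<le> lp / (1 - \<beta>) + M * W x"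
proof -
  assume b: "0 \<le> \<beta>" "\<beta> < 1"
  have "Vd \<beta> n x \<le> Vd \<beta> n 0 + M * W x" using Vd_upper b by simp
  moreover have "Vd \<beta> n 0 \<le> lp / (1 - \<beta>)" using Vd0_le b by simp
  ultimately show ?thesis by linarith
qed

definition Vinf :: "real \<Rightarrow> nat \<Rightarrow> real" where
  "Vinf \<beta> x = lim (\<lambda>n. Vd \<beta> n x)"

lemma Vd_lim: assumes "0 \<le> \<beta>" "\<beta> < 1" shows "(\<lambda>n. Vd \<beta> n x) \<longlonglongrightarrow> Vinf \<beta> x"
proof -
  have "incseq (\<lambda>n. Vd \<beta> n x)" using Vd_inc assms by (intro incseq_SucI) auto
  then obtain L where "(\<lambda>n. Vd \<beta> n x) \<longlonglongrightarrow> L"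
  proof -
    have "\<forall>i. Vd \<beta> i x \<le> lp / (1 - \<beta>) + M * W x" using Vd_bounded assms by blast
    from incseq_convergent[OF \<open>incseq _\<close> this] show ?thesis using that by blast
  qed
  thus ?thesis unfolding Vinf_def by (simp add: limI)
qed

lemma ET_tendsto: "(\<And>y. (\<lambda>n. f n y) \<longlonglongrightarrow> g y) \<Longrightarrow> (\<lambda>n. ET x a (f n)) \<longlonglongrightarrow> ET x a g"
  unfolding ET_sum by (intro tendsto_intros) auto

lemma Bell_tendsto: "(\<And>y. (\<lambda>n. f n y) \<longlonglongrightarrow> g y) \<Longrightarrow> (\<lambda>n. \<beta> n) \<longlonglongrightarrow> b \<Longrightarrow>
   (\<lambda>n. Bell (\<beta> n) (f n) x) \<longlonglongrightarrow> Bell b g x"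
  unfolding Bell_def by (intro tendsto_intros ET_tendsto) auto

lemma Vinf_fix: assumes "0 \<le> \<beta>" "\<beta> < 1" shows "Vinf \<beta> x = Bell \<beta> (Vinf \<beta>) x"
proof -
  have "(\<lambda>n. Vd \<beta> (Suc n) x) \<longlonglongrightarrow> Vinf \<beta> x" using Vd_lim[OF assms] by (rule LIMSEQ_Suc)
  moreover have "(\<lambda>n. Vd \<beta> (Suc n) x) \<longlonglongrightarrow> Bell \<beta> (Vinf \<beta>) x"
    unfolding Vd_Suc by (rule Bell_tendsto) (auto intro: Vd_lim[OF assms])
  ultimately show ?thesis by (rule LIMSEQ_unique)
qed

lemma Vinf_lower: "0 \<le> \<beta> \<Longrightarrow> \<beta> < 1 \<Longrightarrow> Vinf \<beta> 0 - K * W x \<le> Vinf \<beta> x"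
  by (rule LIMSEQ_le[OF tendsto_diff[OF Vd_lim tendsto_const] Vd_lim]) (use Vd_lower in auto)

lemma Vinf_upper: "0 \<le> \<beta> \<Longrightarrow> \<beta> < 1 \<Longrightarrow> Vinf \<beta> x \<le> Vinf \<beta> 0 + M * W x"
  by (rule LIMSEQ_le[OF Vd_lim tendsto_add[OF Vd_lim tendsto_const]]) (use Vd_upper in auto)

lemma Vinf0_bounds: "0 \<le> \<beta> \<Longrightarrow> \<beta> < 1 \<Longrightarrow> 0 \<le> Vinf \<beta> 0 \<and> Vinf \<beta> 0 \<le> lp / (1 - \<beta>)"
  by (auto intro!: LIMSEQ_le_const[OF Vd_lim] LIMSEQ_le_const2[OF Vd_lim] Vd_nonneg Vd0_le)

definition bs :: "nat \<Rightarrow> real" where "bs k = 1 - 1 / (real k + 2)"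

lemma bs0: "0 \<le> bs k" by (simp add: bs_def field_simps)
lemma bs1: "bs k < 1" by (simp add: bs_def)
lemma bs_lim: "bs \<longlonglongrightarrow> 1"
proof -
  have "(\<lambda>k. 1 / (real k + 2)) \<longlonglongrightarrow> 0"
    using LIMSEQ_ignore_initial_segment[OF lim_inverse_n', of 2] by (simp add: add.commute)
  hence "(\<lambda>k. 1 - 1 / (real k + 2)) \<longlonglongrightarrow> 1 - 0" by (intro tendsto_intros)
  thus ?thesis by (simp add: bs_def[abs_def])
qed

definition hk :: "nat \<Rightarrow> nat \<Rightarrow> real" where "hk k x = Vinf (bs k) x - Vinf (bs k) 0"
definition gk :: "nat \<Rightarrow> real" where "gk k = (1 - bs k) * Vinf (bs k) 0"

lemma Bell_shift: "Bell \<beta> (\<lambda>y. f y + c) x = Bell \<beta> f x + \<beta> * c"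
  unfolding Bell_def ET_add ET_const by (simp add: algebra_simps min_add_distrib_right)

lemma hk_eq: "hk k x + gk k = Bell (bs k) (hk k) x"
proof -
  have V: "Vinf (bs k) = (\<lambda>y. hk k y + Vinf (bs k) 0)" by (simp add: hk_def)
  have "Vinf (bs k) x = Bell (bs k) (Vinf (bs k)) x" using Vinf_fix bs0 bs1 by blast
  also have "\<dots> = Bell (bs k) (hk k) x + bs k * Vinf (bs k) 0"
    by (subst V) (rule Bell_shift)
  finally show ?thesis by (simp add: hk_def gk_def algebra_simps)
qed

lemma hk_bounds: "- K * W x \<le> hk k x \<and> hk k x \<le> M * W x"
  using Vinf_lower[OF bs0 bs1, of k x] Vinf_upper[OF bs0 bs1, of k x] by (simp add: hk_def)

lemma gk_bounds: "0 \<le> gk k \<and> gk k \<le> lp"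
proof -
  have "0 \<le> Vinf (bs k) 0" "Vinf (bs k) 0 \<le> lp / (1 - bs k)" using Vinf0_bounds[OF bs0 bs1] by auto
  moreover have "0 < 1 - bs k" using bs1 by simp
  moreover have "0 \<le> (1 - bs k) * Vinf (bs k) 0" using calculation by simp
  ultimately show ?thesis by (simp add: gk_def field_simps)
qed

lemma acoe_exists:
  "\<exists>g h. (\<forall>x. h x + g = Bell 1 h x) \<and> (\<forall>x. \<bar>h x\<bar> \<le> (K + M) * W x)"
proof -
  define F where "F k n = (if n = 0 then gk k else hk k (n - 1))" for k n
  have "\<exists>B. \<forall>k. \<bar>F k n\<bar> \<le> B" for n
  proof (cases "n = 0")
    case True thus ?thesis using gk_bounds by (auto simp: F_def intro!: exI[of _ lp])
  next
    case False
    have "\<bar>hk k (n - 1)\<bar> \<le> (K + M) * W (n - 1)" for k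
      using hk_bounds[of "n - 1" k] mult_nonneg_nonneg[OF K0, of "W (n - 1)"] mult_nonneg_nonneg[OF M0, of "W (n - 1)"] W_ge1[of "n - 1"]
      by (simp add: abs_le_iff algebra_simps)
    thus ?thesis using False by (auto simp: F_def)
  qed
  then obtain r where r: "strict_mono r" "\<And>n. convergent (\<lambda>k. F (r k) n)" using diag_conv by blast
  define g where "g = lim (\<lambda>k. gk (r k))"
  define h where "h x = lim (\<lambda>k. hk (r k) x)" for x
  have gl: "(\<lambda>k. gk (r k)) \<longlonglongrightarrow> g"
    using r(2)[of 0] unfolding g_def F_def by (simp add: convergent_LIMSEQ_iff)
  have hl: "(\<lambda>k. hk (r k) x) \<longlonglongrightarrow> h x" for x
    using r(2)[of "Suc x"] unfolding h_def F_def by (simp add: convergent_LIMSEQ_iff)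
  have bl: "(\<lambda>k. bs (r k)) \<longlonglongrightarrow> 1" using LIMSEQ_subseq_LIMSEQ[OF bs_lim r(1)] by (simp add: o_def)
  have eq: "h x + g = Bell 1 h x" for x
  proof -
    have "(\<lambda>k. hk (r k) x + gk (r k)) \<longlonglongrightarrow> h x + g" by (intro tendsto_intros hl gl)
    moreover have "(\<lambda>k. hk (r k) x + gk (r k)) \<longlonglongrightarrow> Bell 1 h x"
      unfolding hk_eq by (rule Bell_tendsto[OF hl bl])
    ultimately show ?thesis by (rule LIMSEQ_unique)
  qed
  have bd: "\<bar>h x\<bar> \<le> (K + M) * W x" for x
  proof -
    have "\<bar>hk (r k) x\<bar> \<le> (K + M) * W x" for k
      using hk_bounds[of x "r k"] mult_nonneg_nonneg[OF K0, of "W x"] mult_nonneg_nonneg[OF M0, of "W x"] W_ge1[of x]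
      by (simp add: abs_le_iff algebra_simps)
    thus ?thesis by (intro LIMSEQ_le_const2[OF tendsto_rabs[OF hl]]) auto
  qed
  show ?thesis using eq bd by blast
qed

lemma acoe:
  "\<exists>g h v. (\<forall>x a. h x + g \<le> cost C lam x a + ET x a h) \<and> (\<forall>x. h x + g = cost C lam x (v x) + ET x (v x) h)
     \<and> (\<forall>x. \<bar>h x\<bar> \<le> (K + M) * W x)"
proof -
  obtain g h where eq: "\<And>x. h x + g = Bell 1 h x" and bd: "\<And>x. \<bar>h x\<bar> \<le> (K + M) * W x"
    using acoe_exists by blast
  define v where "v x = (cp x True + ET x True h \<le> cp x False + ET x False h)" for x
  have "\<forall>x a. h x + (g - m) \<le> cost C lam x a + ET x a h"
  proof (intro allI)
    fix x a show "h x + (g - m) \<le> cost C lam x a + ET x a h"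
      using eq[of x] by (cases a) (auto simp: Bell_def cp_def)
  qed
  moreover have "\<forall>x. h x + (g - m) = cost C lam x (v x) + ET x (v x) h"
  proof
    fix x show "h x + (g - m) = cost C lam x (v x) + ET x (v x) h"
      using eq[of x] unfolding Bell_def cp_def v_def min_def
      by (cases "cost C lam x True + ET x True h \<le> cost C lam x False + ET x False h") auto
  qed
  ultimately show ?thesis using bd by blast
qed

lemma fin_bool: "finite (set_pmf (Q :: bool pmf))"
  by (rule finite_subset[of _ UNIV]) auto

lemma path_fin: "finite (set_pmf (path_dist p q \<pi> x0 t))"
proof (induction t)
  case 0 thus ?case by simp
next
  case (Suc t)
  show ?case
    by (simp add: set_bind_pmf split_beta)
       (intro finite_UN_I Suc fin_bool finite_imageI qt_fin)
qed

lemma fin_int: "finite (set_pmf Q) \<Longrightarrow> integrable (measure_pmf Q) (f :: 'a \<Rightarrow> real)"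
  by (rule integrable_measure_pmf_finite)

lemma fin_mono: "finite (set_pmf Q) \<Longrightarrow> (\<And>z. z \<in> set_pmf Q \<Longrightarrow> f z \<le> g z) \<Longrightarrow>
   measure_pmf.expectation Q f \<le> measure_pmf.expectation Q (g :: 'a \<Rightarrow> real)"
  by (rule integral_mono_AE) (auto intro!: fin_int AE_pmfI)

lemma fin_add: "finite (set_pmf Q) \<Longrightarrow>
   measure_pmf.expectation Q (\<lambda>z. f z + g z) = measure_pmf.expectation Q f + measure_pmf.expectation Q (g :: 'a \<Rightarrow> real)"
  by (rule Bochner_Integration.integral_add) (auto intro!: fin_int)

lemma fin_diff: "finite (set_pmf Q) \<Longrightarrow>
   measure_pmf.expectation Q (\<lambda>z. f z - g z) = measure_pmf.expectation Q f - measure_pmf.expectation Q (g :: 'a \<Rightarrow> real)"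
  by (rule Bochner_Integration.integral_diff) (auto intro!: fin_int)

lemma Epath_Suc:
  "measure_pmf.expectation (path_dist p q \<pi> x0 (Suc t)) (\<lambda>(hh, x). f x) =
   measure_pmf.expectation (path_dist p q \<pi> x0 t) (\<lambda>(hh, x). measure_pmf.expectation (\<pi> hh x) (\<lambda>a. ET x a f))"
proof -
  have "measure_pmf.expectation (path_dist p q \<pi> x0 (Suc t)) (\<lambda>(hh, x). f x) =
    measure_pmf.expectation (path_dist p q \<pi> x0 t) (\<lambda>z. measure_pmf.expectation
       (case z of (hh, x) \<Rightarrow> bind_pmf (\<pi> hh x) (\<lambda>a. map_pmf (\<lambda>y. (hh @ [(x, a)], y)) (queue_trans p q x a))) (\<lambda>(hh, x). f x))"
    by (simp only: path_dist.simps) (rule exp_bind[OF path_fin], auto simp: split_beta set_bind_pmf intro!: finite_UN_I fin_bool qt_fin)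
  also have "\<dots> = measure_pmf.expectation (path_dist p q \<pi> x0 t) (\<lambda>(hh, x). measure_pmf.expectation (\<pi> hh x) (\<lambda>a. ET x a f))"
  proof (rule Bochner_Integration.integral_cong[OF refl])
    fix z :: "(nat \<times> bool) list \<times> nat"
    obtain hh x where z: "z = (hh, x)" by (cases z)
    show "measure_pmf.expectation (case z of (hh, x) \<Rightarrow> bind_pmf (\<pi> hh x) (\<lambda>a. map_pmf (\<lambda>y. (hh @ [(x, a)], y)) (queue_trans p q x a))) (\<lambda>(hh, x). f x)
       = (case z of (hh, x) \<Rightarrow> measure_pmf.expectation (\<pi> hh x) (\<lambda>a. ET x a f))"
      unfolding z by (simp, subst exp_bind[OF fin_bool]) (auto simp: ET_def qt_fin)
  qed
  finally show ?thesis .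
qed

lemma exp_cost_eq:
  "exp_cost p q C lam \<pi> x0 t =
   measure_pmf.expectation (path_dist p q \<pi> x0 t) (\<lambda>(hh, x). measure_pmf.expectation (\<pi> hh x) (\<lambda>a. cost C lam x a))"
  unfolding exp_cost_def state_action_def
  apply (subst exp_bind[OF path_fin])
   apply (auto simp: split_beta intro!: fin_bool)
  apply (rule Bochner_Integration.integral_cong[OF refl])
  apply (auto simp: split_beta)
  done

definition Wb :: "nat \<Rightarrow> real" where "Wb x0 = max (W x0) (2 / bb)"

lemma EW_bound: "measure_pmf.expectation (path_dist p q \<pi> x0 t) (\<lambda>(hh, x). W x) \<le> Wb x0"
proof (induction t)
  case 0 thus ?case by (simp add: Wb_def)
next
  case (Suc t)
  have "measure_pmf.expectation (path_dist p q \<pi> x0 (Suc t)) (\<lambda>(hh, x). W x) =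
     measure_pmf.expectation (path_dist p q \<pi> x0 t) (\<lambda>(hh, x). measure_pmf.expectation (\<pi> hh x) (\<lambda>a. ET x a W))"
    by (rule Epath_Suc)
  also have "\<dots> \<le> measure_pmf.expectation (path_dist p q \<pi> x0 t) (\<lambda>z. \<rho> * (case z of (hh, x) \<Rightarrow> W x) + 2)"
  proof (rule fin_mono[OF path_fin])
    fix z :: "(nat \<times> bool) list \<times> nat"
    obtain hh x where z: "z = (hh, x)" by (cases z)
    have "measure_pmf.expectation (\<pi> hh x) (\<lambda>a. ET x a W) \<le> measure_pmf.expectation (\<pi> hh x) (\<lambda>a. \<rho> * W x + 2)"
      by (rule fin_mono[OF fin_bool]) (rule Wdrift)
    thus "(case z of (hh, x) \<Rightarrow> measure_pmf.expectation (\<pi> hh x) (\<lambda>a. ET x a W)) \<le> \<rho> * (case z of (hh, x) \<Rightarrow> W x) + 2"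
      by (simp add: z)
  qed
  also have "\<dots> = \<rho> * measure_pmf.expectation (path_dist p q \<pi> x0 t) (\<lambda>(hh, x). W x) + 2"
    by (simp add: fin_add[OF path_fin])
  also have "\<dots> \<le> \<rho> * Wb x0 + 2" using Suc rho by (intro add_right_mono mult_left_mono) auto
  also have "\<dots> \<le> Wb x0"
  proof -
    have "2 / bb \<le> Wb x0" by (simp add: Wb_def)
    hence "2 \<le> bb * Wb x0" using bb0 by (simp add: field_simps)
    thus ?thesis by (simp add: bb_def algebra_simps)
  qed
  finally show ?case .
qed

definition Phi :: "policy \<Rightarrow> nat \<Rightarrow> (nat \<Rightarrow> real) \<Rightarrow> nat \<Rightarrow> real" where
  "Phi \<pi> x0 u t = measure_pmf.expectation (path_dist p q \<pi> x0 t) (\<lambda>(hh, x). u x)"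

lemma Phi_0: "Phi \<pi> x0 u 0 = u x0" by (simp add: Phi_def)

lemma Phi_add: "measure_pmf.expectation (path_dist p q \<pi> x0 t) (\<lambda>z. g + (case z of (hh, x) \<Rightarrow> u x)) = g + Phi \<pi> x0 u t"
  unfolding Phi_def by (subst fin_add[OF path_fin]) simp

lemma step_ineq:
  assumes ineq: "\<And>x a. u x + g \<le> cost C lam x a + ET x a u"
  shows "g + Phi \<pi> x0 u t \<le> exp_cost p q C lam \<pi> x0 t + Phi \<pi> x0 u (Suc t)"
proof -
  have "exp_cost p q C lam \<pi> x0 t + Phi \<pi> x0 u (Suc t) =
     measure_pmf.expectation (path_dist p q \<pi> x0 t) (\<lambda>z. (case z of (hh, x) \<Rightarrow> measure_pmf.expectation (\<pi> hh x) (\<lambda>a. cost C lam x a))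
        + (case z of (hh, x) \<Rightarrow> measure_pmf.expectation (\<pi> hh x) (\<lambda>a. ET x a u)))"
    unfolding exp_cost_eq Phi_def Epath_Suc by (subst fin_add[OF path_fin]) simp
  also have "\<dots> \<ge> measure_pmf.expectation (path_dist p q \<pi> x0 t) (\<lambda>z. g + (case z of (hh, x) \<Rightarrow> u x))"
  proof (rule fin_mono[OF path_fin])
    fix z :: "(nat \<times> bool) list \<times> nat"
    obtain hh x where z: "z = (hh, x)" by (cases z)
    have "measure_pmf.expectation (\<pi> hh x) (\<lambda>a. g + u x) \<le> measure_pmf.expectation (\<pi> hh x) (\<lambda>a. cost C lam x a + ET x a u)"
      by (rule fin_mono[OF fin_bool]) (use ineq in \<open>simp add: algebra_simps\<close>)
    thus "g + (case z of (hh, x) \<Rightarrow> u x) \<le> (case z of (hh, x) \<Rightarrow> measure_pmf.expectation (\<pi> hh x) (\<lambda>a. cost C lam x a))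
        + (case z of (hh, x) \<Rightarrow> measure_pmf.expectation (\<pi> hh x) (\<lambda>a. ET x a u))"
      by (simp add: z fin_add[OF fin_bool])
  qed
  finally show ?thesis unfolding Phi_add by simp
qed

lemma step_eq:
  assumes eq: "\<And>x. u x + g = cost C lam x (v x) + ET x (v x) u"
  shows "exp_cost p q C lam (stationary v) x0 t + Phi (stationary v) x0 u (Suc t) = g + Phi (stationary v) x0 u t"
proof -
  have "exp_cost p q C lam (stationary v) x0 t + Phi (stationary v) x0 u (Suc t) =
     measure_pmf.expectation (path_dist p q (stationary v) x0 t) (\<lambda>z. (case z of (hh, x) \<Rightarrow> cost C lam x (v x))
        + (case z of (hh, x) \<Rightarrow> ET x (v x) u))"
    unfolding exp_cost_eq Phi_def Epath_Suc by (subst fin_add[OF path_fin]) (simp add: stationary_def)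
  also have "\<dots> = measure_pmf.expectation (path_dist p q (stationary v) x0 t) (\<lambda>z. g + (case z of (hh, x) \<Rightarrow> u x))"
    by (rule Bochner_Integration.integral_cong[OF refl]) (use eq in \<open>auto simp: split_beta algebra_simps\<close>)
  finally show ?thesis unfolding Phi_add by simp
qed

lemma sum_ineq:
  assumes ineq: "\<And>x a. u x + g \<le> cost C lam x a + ET x a u"
  shows "real T * g + u x0 - Phi \<pi> x0 u T \<le> (\<Sum>t<T. exp_cost p q C lam \<pi> x0 t)"
proof (induction T)
  case 0 thus ?case by (simp add: Phi_0)
next
  case (Suc T)
  thus ?case using step_ineq[OF ineq, of \<pi> x0 T] by (simp add: algebra_simps)
qed

lemma sum_eq:
  assumes eq: "\<And>x. u x + g = cost C lam x (v x) + ET x (v x) u"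
  shows "(\<Sum>t<T. exp_cost p q C lam (stationary v) x0 t) = real T * g + u x0 - Phi (stationary v) x0 u T"
proof (induction T)
  case 0 thus ?case by (simp add: Phi_0)
next
  case (Suc T)
  thus ?case using step_eq[OF eq, of x0 T] by (simp add: algebra_simps)
qed

lemma Phi_bound:
  assumes bd: "\<And>x. \<bar>u x\<bar> \<le> (K + M) * W x"
  shows "\<bar>Phi \<pi> x0 u T\<bar> \<le> (K + M) * Wb x0"
proof -
  have KM: "0 \<le> K + M" using K0 M0 by simp
  have E: "measure_pmf.expectation (path_dist p q \<pi> x0 T) (\<lambda>z. (K + M) * (case z of (hh, x) \<Rightarrow> W x)) \<le> (K + M) * Wb x0"
  proof -
    have E1: "measure_pmf.expectation (path_dist p q \<pi> x0 T) (\<lambda>z. (K + M) * (case z of (hh, x) \<Rightarrow> W x))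
      = (K + M) * measure_pmf.expectation (path_dist p q \<pi> x0 T) (\<lambda>(hh, x). W x)"
      by (rule integral_mult_right_zero)
    show ?thesis unfolding E1 using EW_bound[of \<pi> x0 T] KM by (rule mult_left_mono)
  qed
  have "Phi \<pi> x0 u T \<le> measure_pmf.expectation (path_dist p q \<pi> x0 T) (\<lambda>z. (K + M) * (case z of (hh, x) \<Rightarrow> W x))"
    unfolding Phi_def by (rule fin_mono[OF path_fin]) (use bd in \<open>auto simp: split_beta abs_le_iff\<close>)
  moreover have "- measure_pmf.expectation (path_dist p q \<pi> x0 T) (\<lambda>z. (K + M) * (case z of (hh, x) \<Rightarrow> W x)) \<le> Phi \<pi> x0 u T"
  proof -
    have "measure_pmf.expectation (path_dist p q \<pi> x0 T) (\<lambda>z. - ((K + M) * (case z of (hh, x) \<Rightarrow> W x))) \<le> Phi \<pi> x0 u T"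
    proof -
      have bdl: "- ((K + M) * W x) \<le> u x" for x using bd[of x] by (simp add: abs_le_iff)
      show ?thesis unfolding Phi_def by (rule fin_mono[OF path_fin]) (use bdl in \<open>auto simp: split_beta\<close>)
    qed
    thus ?thesis by simp
  qed
  ultimately show ?thesis using E by (simp add: abs_le_iff)
qed

lemma limsup_upper:
  fixes f :: "nat \<Rightarrow> real"
  assumes "\<And>T. 1 \<le> T \<Longrightarrow> f T \<le> c + D / real T"
  shows "limsup (\<lambda>T. ereal (f T)) \<le> ereal c"
proof -
  have "limsup (\<lambda>T. ereal (f T)) \<le> limsup (\<lambda>T. ereal (c + D / real T))"
    by (rule Limsup_mono) (use assms in \<open>auto simp: eventually_sequentially intro!: exI[of _ 1]\<close>)
  also have "\<dots> = ereal c"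
  proof (rule lim_imp_Limsup)
    have "(\<lambda>T. c + D / real T) \<longlonglongrightarrow> c + 0" by (intro tendsto_intros)
    thus "(\<lambda>T. ereal (c + D / real T)) \<longlonglongrightarrow> ereal c" by (simp add: tendsto_ereal)
  qed simp
  finally show ?thesis .
qed

lemma limsup_lower:
  fixes f :: "nat \<Rightarrow> real"
  assumes "\<And>T. 1 \<le> T \<Longrightarrow> c - D / real T \<le> f T"
  shows "ereal c \<le> limsup (\<lambda>T. ereal (f T))"
proof -
  have "ereal c = limsup (\<lambda>T. ereal (c - D / real T))"
  proof (rule lim_imp_Limsup[symmetric])
    have "(\<lambda>T. c - D / real T) \<longlonglongrightarrow> c - 0" by (intro tendsto_intros)
    thus "(\<lambda>T. ereal (c - D / real T)) \<longlonglongrightarrow> ereal c" by (simp add: tendsto_ereal)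
  qed simp
  also have "\<dots> \<le> limsup (\<lambda>T. ereal (f T))"
    by (rule Limsup_mono) (use assms in \<open>auto simp: eventually_sequentially intro!: exI[of _ 1]\<close>)
  finally show ?thesis .
qed

lemma lyap:
  assumes al: "0 < \<alpha>" and c: "p * (exp \<alpha> - 1) < q / 2 * (1 - exp (- \<alpha>))"
  shows "\<exists>b>0. \<forall>x::nat. x \<noteq> 0 \<longrightarrow>
     measure_pmf.expectation (queue_trans p q x (v x)) (\<lambda>y. exp (\<alpha> * real y) - exp (\<alpha> * real x))
       \<le> - b * exp (\<alpha> * real x)"
proof -
  define w where "w = p * (exp \<alpha> - 1) - q * (1 - exp (- \<alpha>))"
  have "0 < 1 - exp (- \<alpha>)" using al by simp
  hence "0 < q * (1 - exp (- \<alpha>))" using q0 by simp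
  hence w0: "w < 0" using c by (simp add: w_def)
  show ?thesis
  proof (intro exI[of _ "1 - exp w"] conjI allI impI)
    show "0 < 1 - exp w" using w0 by simp
    fix x :: nat assume "x \<noteq> 0"
    hence x1: "1 \<le> x" by simp
    have "measure_pmf.expectation (queue_trans p q x (v x)) (\<lambda>y. exp (\<alpha> * real y) - exp (\<alpha> * real x))
        = ET x (v x) (\<lambda>y. exp (\<alpha> * real y)) - exp (\<alpha> * real x)"
      by (simp add: ET_def[symmetric] ET_diff ET_const)
    also have "\<dots> \<le> exp w * exp (\<alpha> * real x) - exp (\<alpha> * real x)"
      using drift[OF al x1, of "v x"] by (simp add: w_def)
    also have "\<dots> = - (1 - exp w) * exp (\<alpha> * real x)" by (simp add: algebra_simps)
    finally show "measure_pmf.expectation (queue_trans p q x (v x)) (\<lambda>y. exp (\<alpha> * real y) - exp (\<alpha> * real x))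
       \<le> - (1 - exp w) * exp (\<alpha> * real x)" .
  qed
qed

lemma stable: "stable_policy p q v"
  unfolding stable_policy_def
proof
  fix x0
  have bnd: "(\<Sum>t<T. measure_pmf.expectation (path_dist p q (stationary v) x0 t) (\<lambda>(h, x). real x)) / real T \<le> Wb x0 / a0" for T
  proof -
    have Wb0: "0 \<le> Wb x0 / a0" using W_ge1[of x0] a0_pos by (simp add: Wb_def)
    have each: "measure_pmf.expectation (path_dist p q (stationary v) x0 t) (\<lambda>(h, x). real x) \<le> Wb x0 / a0" for t
    proof -
      have "measure_pmf.expectation (path_dist p q (stationary v) x0 t) (\<lambda>(h, x). real x)
         \<le> measure_pmf.expectation (path_dist p q (stationary v) x0 t) (\<lambda>z. (case z of (h, x) \<Rightarrow> W x) / a0)"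
        by (rule fin_mono[OF path_fin]) (auto simp: split_beta W_lin)
      also have "\<dots> = measure_pmf.expectation (path_dist p q (stationary v) x0 t) (\<lambda>(h, x). W x) / a0"
        by (rule integral_divide_zero)
      also have "\<dots> \<le> Wb x0 / a0" using EW_bound a0_pos by (simp add: divide_right_mono)
      finally show ?thesis .
    qed
    show ?thesis
    proof (cases "T = 0")
      case True thus ?thesis using Wb0 by simp
    next
      case False
      have "(\<Sum>t<T. measure_pmf.expectation (path_dist p q (stationary v) x0 t) (\<lambda>(h, x). real x)) \<le> (\<Sum>t<T. Wb x0 / a0)"
        by (rule sum_mono) (rule each)
      also have "\<dots> = real T * (Wb x0 / a0)" by simp
      finally show ?thesis using False by (simp add: field_simps)
    qed
  qed
  have "limsup (\<lambda>T. ereal ((\<Sum>t<T. measure_pmf.expectation (path_dist p q (stationary v) x0 t) (\<lambda>(h, x). real x)) / real T))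
     \<le> limsup (\<lambda>T. ereal (Wb x0 / a0))"
    by (rule Limsup_mono) (use bnd in auto)
  also have "\<dots> = ereal (Wb x0 / a0)" by (simp add: Limsup_const)
  finally show "limsup (\<lambda>T. ereal ((\<Sum>t<T. measure_pmf.expectation (path_dist p q (stationary v) x0 t) (\<lambda>(h, x). real x)) / real T)) < \<infinity>"
    by (rule order.strict_trans1) simp
qed

lemma optimal: "\<exists>v. \<forall>\<pi> x0. avg_cost p q C lam (stationary v) x0 \<le> avg_cost p q C lam \<pi> x0"
proof -
  obtain g u v where ineq: "\<And>x a. u x + g \<le> cost C lam x a + ET x a u"
    and eq: "\<And>x. u x + g = cost C lam x (v x) + ET x (v x) u"
    and bd: "\<And>x. \<bar>u x\<bar> \<le> (K + M) * W x"
    using acoe by blast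
  have up: "avg_cost p q C lam (stationary v) x0 \<le> ereal g" for x0
    unfolding avg_cost_def
  proof (rule limsup_upper[where D = "\<bar>u x0\<bar> + (K + M) * Wb x0"])
    fix T :: nat assume T: "1 \<le> T"
    have "(\<Sum>t<T. exp_cost p q C lam (stationary v) x0 t) \<le> real T * g + (\<bar>u x0\<bar> + (K + M) * Wb x0)"
      unfolding sum_eq[OF eq] using Phi_bound[OF bd, of "stationary v" x0 T] abs_ge_self[of "u x0"] by (simp add: abs_le_iff)
    thus "(\<Sum>t<T. exp_cost p q C lam (stationary v) x0 t) / real T \<le> g + (\<bar>u x0\<bar> + (K + M) * Wb x0) / real T"
      using T by (simp add: field_simps)
  qed
  have lo: "ereal g \<le> avg_cost p q C lam \<pi> x0" for \<pi> x0
    unfolding avg_cost_def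
  proof (rule limsup_lower[where D = "\<bar>u x0\<bar> + (K + M) * Wb x0"])
    fix T :: nat assume T: "1 \<le> T"
    have "real T * g - (\<bar>u x0\<bar> + (K + M) * Wb x0) \<le> (\<Sum>t<T. exp_cost p q C lam \<pi> x0 t)"
      using sum_ineq[OF ineq, of T x0 \<pi>] Phi_bound[OF bd, of \<pi> x0 T] abs_ge_minus_self[of "u x0"] by (simp add: abs_le_iff)
    moreover have Tp: "0 < real T" using T by simp
    moreover have "g - (\<bar>u x0\<bar> + (K + M) * Wb x0) / real T = (real T * g - (\<bar>u x0\<bar> + (K + M) * Wb x0)) / real T"
      using Tp by (simp add: field_simps)
    ultimately show "g - (\<bar>u x0\<bar> + (K + M) * Wb x0) / real T \<le> (\<Sum>t<T. exp_cost p q C lam \<pi> x0 t) / real T"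
      by (simp add: divide_right_mono)
  qed
  show ?thesis using up lo order.trans by blast
qed

end

theorem lemma3:
  fixes p q C lam :: real
  assumes "0 < p" and "p < 1" and "2 * p < q" and "q < 1" and "0 < C"
  shows "\<exists>v :: nat \<Rightarrow> bool.
           (\<forall>\<pi> x0. avg_cost p q C lam (stationary v) x0 \<le> avg_cost p q C lam \<pi> x0)
         \<and> stable_policy p q v
         \<and> (\<forall>a::real. 0 < a \<and> p * (exp a - 1) < q / 2 * (1 - exp (- a)) \<longrightarrow>
              (\<exists>b>0. \<forall>x::nat. x \<noteq> 0 \<longrightarrow>
                 measure_pmf.expectation (queue_trans p q x (v x)) (\<lambda>y. exp (a * real y) - exp (a * real x))
                   \<le> - b * exp (a * real x)))"
proof -
  interpret qs p q C lam using assms by unfold_locales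
  obtain v where v: "\<forall>\<pi> x0. avg_cost p q C lam (stationary v) x0 \<le> avg_cost p q C lam \<pi> x0"
    using optimal by blast
  show ?thesis using v stable lyap by blast
qed

end
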